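(* Let $m=d_1+\cdots+d_k$ with $d_j\ge1$, $W_1,\ldots,W_k$ 2-dimensional vector spaces, and suppose the 1-dimensional subspaces $$\Gamma_j=\bigotimes_{r\ne j}\bigotimes_{p=1}^{d_r}a_j^{r,p},\qquad a_j^{r,p}\subset W_r^*\ \text{1-dimensional},$$ are such that $\sum_{j=1}^k ins_j(S^{d_j}W_j^*\otimes\Gamma_j)$ has dimension $m+1$. Then $a_j^{r,1}=\cdots=a_j^{r,d_r}=:a_j^r$ for all $j\neq r$, i.e. $\Gamma_j=\bigotimes_{r\ne j}(a_j^r)^{\otimes d_r}$.
   Context: The vector spaces are real or complex. $S^dW^*\subset(W^* )^{\otimes d}$ denotes the symmetric tensors. For each $j$, $ins_j:(W_j^* )^{\otimes d_j}\otimes\bigotimes_{i\ne j}(W_i^* )^{\otimes d_i}\to\bigotimes_{i=1}^k(W_i^* )^{\otimes d_i}$ places the first factor into the $j$-th group of $d_j$ slots; in $\bigotimes_{r\ne j}\bigotimes_{p}a_j^{r,p}$ the factor $a_j^{r,p}$ occupies the $p$-th slot of the $r$-th group. *)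

theory Defs
  imports "HOL-Analysis.Analysis" "HOL-Library.Function_Algebras" "HOL-Combinatorics.Permutations"
begin

text \<open>Coordinates: each dual space W_r^* (dimension 2) is identified with functions
  bool => 'a (two coordinates).  The tensor space of the k groups of d_r slots
  (groups r < k, slots p < d r) is identified with functions from index assignments
  x :: nat => nat => bool (x r p = index in slot p of group r) to scalars, where only
  valid assignments (x r p = False outside the slots) matter; tensors vanish elsewhere.\<close>

definition valid_idx :: "nat \<Rightarrow> (nat \<Rightarrow> nat) \<Rightarrow> (nat \<Rightarrow> nat \<Rightarrow> bool) \<Rightarrow> bool" where
  "valid_idx k d x \<longleftrightarrow> (\<forall>r p. \<not> (r < k \<and> p < d r) \<longrightarrow> x r p = False)"

definition tscale :: "'a::field \<Rightarrow> ('i \<Rightarrow> 'a) \<Rightarrow> ('i \<Rightarrow> 'a)" where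
  "tscale c T = (\<lambda>x. c * T x)"

definition tdim :: "('i \<Rightarrow> 'a::field) set \<Rightarrow> nat" where
  "tdim S = vector_space.dim tscale S"

definition symmetric_tensor :: "nat \<Rightarrow> ((nat \<Rightarrow> bool) \<Rightarrow> 'a) \<Rightarrow> bool" where
  "symmetric_tensor d S \<longleftrightarrow> (\<forall>\<sigma>. \<sigma> permutes {..<d} \<longrightarrow> (\<forall>y. S (y \<circ> \<sigma>) = S y))"

text \<open>ins_j (S^{d_j} W_j^* \<otimes> \<Gamma>_j) where \<Gamma>_j is spanned by
  \<Otimes>_{r \<noteq> j} \<Otimes>_p a j r p.\<close>
definition ins_space ::
  "nat \<Rightarrow> (nat \<Rightarrow> nat) \<Rightarrow> (nat \<Rightarrow> nat \<Rightarrow> nat \<Rightarrow> bool \<Rightarrow> 'a::field) \<Rightarrow> nat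
     \<Rightarrow> ((nat \<Rightarrow> nat \<Rightarrow> bool) \<Rightarrow> 'a) set" where
  "ins_space k d a j = {T. \<exists>S. symmetric_tensor (d j) S \<and>
     T = (\<lambda>x. if valid_idx k d x
              then S (x j) * (\<Prod>r\<in>{..<k} - {j}. \<Prod>p<d r. a j r p (x r p))
              else 0)}"

definition same_line :: "(bool \<Rightarrow> 'a::field) \<Rightarrow> (bool \<Rightarrow> 'a) \<Rightarrow> bool" where
  "same_line u v \<longleftrightarrow> (\<exists>c. c \<noteq> 0 \<and> u = (\<lambda>i. c * v i))"

end

theory Submission
  imports Defs
begin



lemma sum_fun_apply: "(sum f I) x = (\<Sum>i\<in>I. f i x)"
  by (induction I rule: infinite_finite_induct) auto

lemma vs_tscale: "vector_space (tscale :: 'a::field \<Rightarrow> ('i \<Rightarrow> 'a) \<Rightarrow> _)"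
  by unfold_locales (auto simp: tscale_def fun_eq_iff algebra_simps)

definition Pb :: "nat \<Rightarrow> (bool \<Rightarrow> 'a::field) \<Rightarrow> (nat \<Rightarrow> bool) \<Rightarrow> 'a" where
  "Pb D \<beta> z = (\<Prod>p<D. \<beta> (z p))"

definition Gam :: "nat \<Rightarrow> (nat \<Rightarrow> nat) \<Rightarrow> (nat \<Rightarrow> nat \<Rightarrow> nat \<Rightarrow> bool \<Rightarrow> 'a::field) \<Rightarrow> nat
   \<Rightarrow> (nat \<Rightarrow> nat \<Rightarrow> bool) \<Rightarrow> 'a" where
  "Gam k d a l x = (\<Prod>r\<in>{..<k} - {l}. \<Prod>p<d r. a l r p (x r p))"

definition Q :: "nat \<Rightarrow> (nat \<Rightarrow> nat) \<Rightarrow> (nat \<Rightarrow> nat \<Rightarrow> nat \<Rightarrow> bool \<Rightarrow> 'a::field) \<Rightarrow> nat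
   \<Rightarrow> (bool \<Rightarrow> 'a) \<Rightarrow> (nat \<Rightarrow> nat \<Rightarrow> bool) \<Rightarrow> 'a" where
  "Q k d a l \<beta> = (\<lambda>x. if valid_idx k d x then Pb (d l) \<beta> (x l) * Gam k d a l x else 0)"

definition Aset :: "nat \<Rightarrow> (nat \<Rightarrow> nat) \<Rightarrow> nat \<Rightarrow> (nat \<times> nat) set" where
  "Aset k d L = Sigma ({..<k} - {L}) (\<lambda>r. {..<d r})"

definition mrg :: "nat \<Rightarrow> (nat \<Rightarrow> nat) \<Rightarrow> nat \<Rightarrow> (nat \<Rightarrow> bool) \<Rightarrow> (nat \<times> nat \<Rightarrow> bool) \<Rightarrow> nat \<Rightarrow> nat \<Rightarrow> bool" where
  "mrg k d L y g = (\<lambda>r p. if r = L \<and> p < d L then y p else if (r,p) \<in> Aset k d L then g (r,p) else False)"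

definition vv :: "'a::field \<Rightarrow> bool \<Rightarrow> 'a" where "vv t b = (if b then t else 1)"

definition psi :: "nat \<Rightarrow> (nat \<Rightarrow> nat) \<Rightarrow> 'a::field \<Rightarrow> nat \<Rightarrow> (nat \<Rightarrow> bool) \<Rightarrow> ((nat \<Rightarrow> nat \<Rightarrow> bool) \<Rightarrow> 'a) \<Rightarrow> 'a" where
  "psi k d t L y T = (\<Sum>g\<in>PiE (Aset k d L) (\<lambda>_. UNIV). T (mrg k d L y g) * (\<Prod>s\<in>Aset k d L. vv t (g s)))"

lemma finite_Aset[simp]: "finite (Aset k d L)"
  by (simp add: Aset_def)

lemma psi_lin: "psi k d t L y (\<Sum>i\<in>I. tscale (c i) (F i)) = (\<Sum>i\<in>I. c i * psi k d t L y (F i))"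
  unfolding psi_def sum_fun_apply tscale_def
  by (simp add: sum_distrib_left sum_distrib_right mult.assoc sum.swap[of _ I])

lemma psi_diff: "psi k d t L y (\<lambda>x. A x - c * B x) = psi k d t L y A - c * psi k d t L y B"
  unfolding psi_def by (simp add: sum_subtractf sum_distrib_left algebra_simps)

lemma sum_PiE_bool:
  fixes f :: "'b \<Rightarrow> bool \<Rightarrow> 'a::comm_semiring_1"
  assumes "finite A"
  shows "(\<Sum>g\<in>PiE A (\<lambda>_. UNIV). \<Prod>s\<in>A. f s (g s)) = (\<Prod>s\<in>A. f s False + f s True)"
proof -
  have "(\<Prod>s\<in>A. f s False + f s True) = (\<Prod>s\<in>A. \<Sum>b\<in>UNIV. f s b)"
    by (simp add: UNIV_bool add.commute)
  also have "\<dots> = (\<Sum>g\<in>PiE A (\<lambda>_. UNIV). \<Prod>s\<in>A. f s (g s))"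
    by (rule prod_sum_PiE) (use assms in auto)
  finally show ?thesis by simp
qed

lemma psi_reduce:
  fixes f :: "nat \<Rightarrow> nat \<Rightarrow> bool \<Rightarrow> 'a::field"
  assumes "\<And>g. T (mrg k d L y g) = X * (\<Prod>r\<in>{..<k}-{L}. \<Prod>p<d r. f r p (g (r,p)))"
  shows "psi k d t L y T = X * (\<Prod>r\<in>{..<k}-{L}. \<Prod>p<d r. (f r p False + t * f r p True))"
proof -
  have nest: "\<And>h :: nat \<times> nat \<Rightarrow> 'a. (\<Prod>r\<in>{..<k}-{L}. \<Prod>p<d r. h (r,p)) = (\<Prod>s\<in>Aset k d L. h s)"
    unfolding Aset_def by (subst prod.Sigma) (auto simp: case_prod_beta')
  have "psi k d t L y T = (\<Sum>g\<in>PiE (Aset k d L) (\<lambda>_. UNIV).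
          X * (\<Prod>s\<in>Aset k d L. f (fst s) (snd s) (g s) * vv t (g s)))"
    unfolding psi_def assms
    by (rule sum.cong[OF refl]) (simp add: nest[of "\<lambda>s. f (fst s) (snd s) (g s)" for g, simplified] prod.distrib)
  also have "\<dots> = X * (\<Prod>s\<in>Aset k d L. f (fst s) (snd s) False * vv t False + f (fst s) (snd s) True * vv t True)"
    by (simp add: sum_distrib_left[symmetric] sum_PiE_bool[where f="\<lambda>s b. f (fst s) (snd s) b * vv t b"])
  also have "\<dots> = X * (\<Prod>r\<in>{..<k}-{L}. \<Prod>p<d r. (f r p False + t * f r p True))"
    by (subst nest[symmetric]) (simp add: vv_def mult.commute)
  finally show ?thesis .
qed



lemma mrg_valid: "L < k \<Longrightarrow> valid_idx k d (mrg k d L y g)"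
  by (auto simp: valid_idx_def mrg_def Aset_def)

lemma Q_mrg_same:
  assumes "L < k"
  shows "Q k d a L \<beta> (mrg k d L y g) = Pb (d L) \<beta> y * (\<Prod>r\<in>{..<k}-{L}. \<Prod>p<d r. a L r p (g (r,p)))"
proof -
  have "Pb (d L) \<beta> (mrg k d L y g L) = Pb (d L) \<beta> y"
    unfolding Pb_def by (rule prod.cong) (auto simp: mrg_def)
  moreover have "Gam k d a L (mrg k d L y g) = (\<Prod>r\<in>{..<k}-{L}. \<Prod>p<d r. a L r p (g (r,p)))"
    unfolding Gam_def by (intro prod.cong refl) (auto simp: mrg_def Aset_def)
  ultimately show ?thesis using assms by (simp add: Q_def mrg_valid)
qed

lemma Q_mrg_other:
  assumes "L < k" "l < k" "l \<noteq> L"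
  shows "Q k d a l \<beta> (mrg k d L y g) = (\<Prod>p<d L. a l L p (y p)) *
     (\<Prod>r\<in>{..<k}-{L}. \<Prod>p<d r. (if r = l then \<beta> (g (r,p)) else a l r p (g (r,p))))"
proof -
  have e1: "Pb (d l) \<beta> (mrg k d L y g l) = (\<Prod>p<d l. \<beta> (g (l,p)))"
    unfolding Pb_def by (rule prod.cong) (use assms in \<open>auto simp: mrg_def Aset_def\<close>)
  have "Gam k d a l (mrg k d L y g) = (\<Prod>p<d L. a l L p (mrg k d L y g L p)) *
      (\<Prod>r\<in>{..<k}-{l}-{L}. \<Prod>p<d r. a l r p (mrg k d L y g r p))"
    unfolding Gam_def by (rule prod.remove) (use assms in auto)
  also have "\<dots> = (\<Prod>p<d L. a l L p (y p)) * (\<Prod>r\<in>{..<k}-{L}-{l}. \<Prod>p<d r. a l r p (g (r,p)))"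
    by (intro arg_cong2[where f="(*)"] prod.cong) (auto simp: mrg_def Aset_def)
  finally have e2: "Gam k d a l (mrg k d L y g) = \<dots>" .
  have e3: "(\<Prod>r\<in>{..<k}-{L}. \<Prod>p<d r. (if r = l then \<beta> (g (r,p)) else a l r p (g (r,p)))) =
     (\<Prod>p<d l. \<beta> (g (l,p))) * (\<Prod>r\<in>{..<k}-{L}-{l}. \<Prod>p<d r. a l r p (g (r,p)))"
    by (subst prod.remove[of _ l]) (use assms in auto)
  show ?thesis using assms by (simp add: Q_def mrg_valid e1 e2 e3 algebra_simps)
qed

definition Gf :: "nat \<Rightarrow> (nat \<Rightarrow> nat) \<Rightarrow> (nat \<Rightarrow> nat \<Rightarrow> nat \<Rightarrow> bool \<Rightarrow> 'a::field) \<Rightarrow> 'a \<Rightarrow> nat \<Rightarrow> 'a" where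
  "Gf k d a t L = (\<Prod>r\<in>{..<k}-{L}. \<Prod>p<d r. (a L r p False + t * a L r p True))"

definition Rf :: "nat \<Rightarrow> (nat \<Rightarrow> nat) \<Rightarrow> (nat \<Rightarrow> nat \<Rightarrow> nat \<Rightarrow> bool \<Rightarrow> 'a::field) \<Rightarrow> 'a \<Rightarrow> nat \<Rightarrow> nat \<Rightarrow> 'a" where
  "Rf k d a t l L = (\<Prod>r\<in>{..<k}-{L}-{l}. \<Prod>p<d r. (a l r p False + t * a l r p True))"

lemma psiQ_same: "L < k \<Longrightarrow> psi k d t L y (Q k d a L \<beta>) = Pb (d L) \<beta> y * Gf k d a t L"
  unfolding Gf_def by (rule psi_reduce) (rule Q_mrg_same)

lemma psiQ_other:
  assumes "L < k" "l < k" "l \<noteq> L"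
  shows "psi k d t L y (Q k d a l \<beta>) = (\<Prod>p<d L. a l L p (y p)) * ((\<beta> False + t * \<beta> True) ^ d l * Rf k d a t l L)"
proof -
  have "psi k d t L y (Q k d a l \<beta>) = (\<Prod>p<d L. a l L p (y p)) *
     (\<Prod>r\<in>{..<k}-{L}. \<Prod>p<d r. ((if r = l then \<beta> False else a l r p False) + t * (if r = l then \<beta> True else a l r p True)))"
    by (rule psi_reduce[where f="\<lambda>r p b. if r = l then \<beta> b else a l r p b"])
       (simp add: Q_mrg_other[OF assms] if_distrib)
  also have "(\<Prod>r\<in>{..<k}-{L}. \<Prod>p<d r. ((if r = l then \<beta> False else a l r p False) + t * (if r = l then \<beta> True else a l r p True)))
     = (\<Prod>p<d l. (\<beta> False + t * \<beta> True)) * Rf k d a t l L"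
    unfolding Rf_def by (subst prod.remove[of _ l]) (use assms in auto)
  finally show ?thesis by simp
qed

definition bet :: "'a::field \<Rightarrow> bool \<Rightarrow> 'a" where "bet u b = (if b then u else 1)"

definition Fe :: "nat \<Rightarrow> (nat \<Rightarrow> nat) \<Rightarrow> (nat \<Rightarrow> nat \<Rightarrow> nat \<Rightarrow> bool \<Rightarrow> 'a::field) \<Rightarrow> 'a \<Rightarrow> nat \<times> nat
   \<Rightarrow> (nat \<Rightarrow> nat \<Rightarrow> bool) \<Rightarrow> 'a" where
  "Fe k d a t i = (if snd i = 0 then Q k d a (fst i) (bet 0)
     else (\<lambda>x. Q k d a (fst i) (bet (of_nat (snd i))) x - (1 + t * of_nat (snd i)) ^ d (fst i) * Q k d a (fst i) (bet 0) x))"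

lemma psiFe_same: "L < k \<Longrightarrow> w \<noteq> 0 \<Longrightarrow> psi k d t L y (Fe k d a t (L,w)) =
   (Pb (d L) (bet (of_nat w)) y - (1 + t * of_nat w) ^ d L * Pb (d L) (bet 0) y) * Gf k d a t L"
  by (simp add: Fe_def psi_diff psiQ_same) (simp add: algebra_simps)

lemma psiFe_other: "L < k \<Longrightarrow> l < k \<Longrightarrow> l \<noteq> L \<Longrightarrow> w \<noteq> 0 \<Longrightarrow> psi k d t L y (Fe k d a t (l,w)) = 0"
  by (simp add: Fe_def psi_diff psiQ_other bet_def)

lemma psiFe0_same: "L < k \<Longrightarrow> psi k d t L y (Fe k d a t (L,0)) = Pb (d L) (bet 0) y * Gf k d a t L"
  by (simp add: Fe_def psiQ_same)

lemma psiFe0_other: "L < k \<Longrightarrow> l < k \<Longrightarrow> l \<noteq> L \<Longrightarrow> psi k d t L y (Fe k d a t (l,0)) = (\<Prod>p<d L. a l L p (y p)) * Rf k d a t l L"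
  by (simp add: Fe_def psiQ_other bet_def)

lemma Pb_perm: "\<sigma> permutes {..<D} \<Longrightarrow> Pb D \<beta> (y \<circ> \<sigma>) = Pb D \<beta> y"
  unfolding Pb_def using prod.permute[of \<sigma> "{..<D}" "\<lambda>p. \<beta> (y p)"] by (simp add: comp_def)

lemma Fe_ins: "l < k \<Longrightarrow> Fe k d a t (l,w) \<in> ins_space k d a l"
proof (cases "w = 0")
  case True
  then show ?thesis unfolding ins_space_def
    by (intro CollectI exI[of _ "Pb (d l) (bet 0)"] conjI)
       (auto simp: Fe_def Q_def Gam_def symmetric_tensor_def Pb_perm)
next
  case False
  then show ?thesis unfolding ins_space_def
    by (intro CollectI exI[of _ "\<lambda>z. Pb (d l) (bet (of_nat w)) z - (1 + t * of_nat w) ^ d l * Pb (d l) (bet 0) z"] conjI)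
       (auto simp: Fe_def Q_def Gam_def symmetric_tensor_def Pb_perm fun_eq_iff algebra_simps)
qed



lemma vdm:
  fixes c :: "nat \<Rightarrow> 'a::field_char_0"
  assumes "\<forall>n\<in>{1..N}. (\<Sum>w\<in>{1..N}. c w * of_nat w ^ n) = 0"
  shows "\<forall>w\<in>{1..N}. c w = 0"
  using assms
proof (induction N arbitrary: c)
  case 0
  then show ?case by simp
next
  case (Suc N)
  define c' where "c' w = c w * (of_nat w - of_nat (Suc N))" for w
  have "\<forall>n\<in>{1..N}. (\<Sum>w\<in>{1..N}. c' w * of_nat w ^ n) = 0"
  proof
    fix n assume n: "n \<in> {1..N}"
    have A: "(\<Sum>w\<in>{1..Suc N}. c w * of_nat w ^ Suc n) = 0" by (rule bspec[OF Suc.prems]) (use n in auto)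
    have B: "(\<Sum>w\<in>{1..Suc N}. c w * of_nat w ^ n) = 0" by (rule bspec[OF Suc.prems]) (use n in auto)
    have "(\<Sum>w\<in>{1..N}. c' w * of_nat w ^ n) = (\<Sum>w\<in>{1..Suc N}. c' w * of_nat w ^ n)"
      by (simp add: c'_def)
    also have "\<dots> = (\<Sum>w\<in>{1..Suc N}. c w * of_nat w ^ Suc n - of_nat (Suc N) * (c w * of_nat w ^ n))"
      by (rule sum.cong) (auto simp: c'_def algebra_simps)
    also have "\<dots> = (\<Sum>w\<in>{1..Suc N}. c w * of_nat w ^ Suc n) - of_nat (Suc N) * (\<Sum>w\<in>{1..Suc N}. c w * of_nat w ^ n)"
      by (simp only: sum_subtractf sum_distrib_left)
    also have "\<dots> = 0" by (simp only: A B) simp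
    finally show "(\<Sum>w\<in>{1..N}. c' w * of_nat w ^ n) = 0" .
  qed
  note IH = Suc.IH[OF this]
  have h: "\<forall>w\<in>{1..N}. c w = 0"
  proof
    fix w assume w: "w \<in> {1..N}"
    have "c' w = 0" using IH w by auto
    moreover have "(of_nat w :: 'a) \<noteq> of_nat (Suc N)" using w by (simp only: of_nat_eq_iff) auto
    ultimately show "c w = 0" by (simp add: c'_def)
  qed
  have "(\<Sum>w\<in>{1..Suc N}. c w * of_nat w ^ 1) = 0" by (rule bspec[OF Suc.prems]) auto
  hence "c (Suc N) * of_nat (Suc N) = 0" using h by simp
  hence "c (Suc N) = 0" by (simp del: of_nat_Suc)
  with h show ?case by (auto simp: le_Suc_eq)
qed

lemma Pb_prefix: "n \<le> D \<Longrightarrow> Pb D (bet u) (\<lambda>p. p < n) = u ^ n"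
proof -
  assume "n \<le> D"
  have "Pb D (bet u) (\<lambda>p. p < n) = (\<Prod>p\<in>{..<D}. if p < n then u else 1)"
    by (simp add: Pb_def bet_def)
  also have "\<dots> = (\<Prod>p\<in>{..<D} \<inter> {p. p < n}. u)"
    by (simp add: prod.If_cases)
  also have "{..<D} \<inter> {p. p < n} = {..<n}" using \<open>n \<le> D\<close> by auto
  finally show ?thesis by simp
qed

lemma bool_fun_zero: "f False = 0 \<Longrightarrow> f True = 0 \<Longrightarrow> f = 0"
  by (rule ext) (case_tac x, auto)

lemma det_nz:
  fixes u v :: "bool \<Rightarrow> 'a::field"
  assumes "u \<noteq> 0" "v \<noteq> 0" "\<not> same_line u v"
  shows "u False * v True - u True * v False \<noteq> 0"
proof
  assume det: "u False * v True - u True * v False = 0"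
  have uv: "u = (\<lambda>b. if b then u True else u False)" "v = (\<lambda>b. if b then v True else v False)"
    by (auto simp: fun_eq_iff)
  show False
  proof (cases "v False = 0")
    case False
    define c where "c = u False / v False"
    have "u = (\<lambda>i. c * v i)"
      using det False by (subst uv(1), auto simp: fun_eq_iff c_def field_simps)
    moreover have "c \<noteq> 0"
      using \<open>u \<noteq> 0\<close> calculation by auto
    ultimately show False using assms(3) by (auto simp: same_line_def)
  next
    case True
    hence vT: "v True \<noteq> 0" using assms(2) bool_fun_zero[of v] by auto
    hence uF: "u False = 0" using det True by simp
    define c where "c = u True / v True"
    have "u = (\<lambda>i. c * v i)"
      using vT uF True by (subst uv(1), auto simp: fun_eq_iff c_def field_simps)
    moreover have "c \<noteq> 0"
      using \<open>u \<noteq> 0\<close> calculation by auto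
    ultimately show False using assms(3) by (auto simp: same_line_def)
  qed
qed

lemma prod_two:
  fixes D :: nat and f :: "nat \<Rightarrow> 'a::comm_monoid_mult"
  assumes "p < D" "q < D" "p \<noteq> q"
  shows "(\<Prod>s<D. f s) = f p * f q * (\<Prod>s\<in>{..<D}-{p}-{q}. f s)"
proof -
  have "(\<Prod>s<D. f s) = f p * prod f ({..<D}-{p})" using assms prod.remove[of "{..<D}" p f] by simp
  moreover have "prod f ({..<D}-{p}) = f q * prod f ({..<D}-{p}-{q})"
    using assms by (intro prod.remove) auto
  ultimately show ?thesis by (simp add: mult.assoc)
qed

lemma alpha_swap:
  fixes A :: "nat \<Rightarrow> bool \<Rightarrow> 'a::field"
  assumes pq: "p < D" "q < D" "p \<noteq> q"
    and nz: "\<forall>s<D. A s \<noteq> 0"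
    and ns: "\<not> same_line (A p) (A q)"
  defines "y1 \<equiv> (\<lambda>s. if s = p then False else if s = q then True else A s False = 0)"
  shows "(\<Prod>s<D. A s (y1 s)) \<noteq> (\<Prod>s<D. A s ((y1 \<circ> Transposition.transpose p q) s))"
proof
  let ?y2 = "y1 \<circ> Transposition.transpose p q"
  define R where "R = (\<Prod>s\<in>{..<D}-{p}-{q}. A s (y1 s))"
  have R2: "(\<Prod>s\<in>{..<D}-{p}-{q}. A s (?y2 s)) = R"
    unfolding R_def by (rule prod.cong) (auto simp: transpose_def)
  have Rnz: "R \<noteq> 0"
  proof -
    have "A s (y1 s) \<noteq> 0" if "s \<in> {..<D}-{p}-{q}" for s
    proof
      assume h: "A s (y1 s) = 0"
      have "A s \<noteq> 0" using nz that by auto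
      moreover have "A s False = 0 \<and> A s True = 0"
        using h that by (cases "A s False = 0") (auto simp: y1_def)
      ultimately show False using bool_fun_zero[of "A s"] by auto
    qed
    thus ?thesis unfolding R_def by simp
  qed
  assume eq: "(\<Prod>s<D. A s (y1 s)) = (\<Prod>s<D. A s (?y2 s))"
  have y1p: "y1 p = False" "y1 q = True" "?y2 p = True" "?y2 q = False"
    using pq by (auto simp: y1_def transpose_def)
  have "(\<Prod>s<D. A s (y1 s)) = A p False * A q True * R"
    using prod_two[OF pq, of "\<lambda>s. A s (y1 s)"] by (simp only: R_def y1p)
  moreover have "(\<Prod>s<D. A s (?y2 s)) = A p True * A q False * R"
    using prod_two[OF pq, of "\<lambda>s. A s (?y2 s)"] by (simp only: R2 y1p)
  ultimately have "(A p False * A q True - A p True * A q False) * R = 0"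
    using eq by (simp add: algebra_simps)
  with Rnz det_nz[of "A p" "A q"] nz pq ns show False by auto
qed

lemma generic_t:
  fixes a :: "nat \<Rightarrow> nat \<Rightarrow> nat \<Rightarrow> bool \<Rightarrow> 'a::real_normed_field"
  assumes a_nz: "\<forall>j<k. \<forall>r<k. r \<noteq> j \<longrightarrow> (\<forall>p<d r. a j r p \<noteq> 0)"
  obtains t where "\<forall>j<k. \<forall>r<k. r \<noteq> j \<longrightarrow> (\<forall>p<d r. a j r p False + t * a j r p True \<noteq> 0)"
proof -
  define B where "B = (\<lambda>(j,r,p). - a j r p False / a j r p True) ` (Sigma {..<k} (\<lambda>j. Sigma {..<k} (\<lambda>r. {..<d r})))"
  have "finite B" unfolding B_def by auto
  then obtain t where t: "t \<notin> B" using ex_new_if_finite[OF infinite_UNIV_char_0] by blast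
  have "a j r p False + t * a j r p True \<noteq> 0" if "j < k" "r < k" "r \<noteq> j" "p < d r" for j r p
  proof
    assume h: "a j r p False + t * a j r p True = 0"
    show False
    proof (cases "a j r p True = 0")
      case True
      with h have "a j r p False = 0" by simp
      with True have "a j r p = 0" using bool_fun_zero[of "a j r p"] by auto
      with a_nz that show False by auto
    next
      case False
      with h have "t = - a j r p False / a j r p True" by (simp add: field_simps add_eq_0_iff)
      moreover have "(j,r,p) \<in> Sigma {..<k} (\<lambda>j. Sigma {..<k} (\<lambda>r. {..<d r}))" using that by auto
      ultimately have "t \<in> B" unfolding B_def by (auto intro!: image_eqI[where x="(j,r,p)"])
      with t show False by simp
    qed
  qed
  thus ?thesis using that by blast
qed



lemma vdm2:
  fixes c :: "nat \<Rightarrow> 'a::field_char_0"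
  assumes G: "G \<noteq> 0"
    and h: "\<forall>n\<in>{1..D}. (\<Sum>w\<in>{1..D}. c w * ((Pb D (bet (of_nat w)) (\<lambda>p. p < n) - \<kappa> w * Pb D (bet 0) (\<lambda>p. p < n)) * G)) = 0"
  shows "\<forall>w\<in>{1..D}. c w = 0"
proof (rule vdm, rule ballI)
  fix n assume n: "n \<in> {1..D}"
  have "(\<Sum>w\<in>{1..D}. c w * ((Pb D (bet (of_nat w)) (\<lambda>p. p < n) - \<kappa> w * Pb D (bet 0) (\<lambda>p. p < n)) * G))
      = (\<Sum>w\<in>{1..D}. c w * of_nat w ^ n) * G"
    using n by (simp add: Pb_prefix sum_distrib_right mult.assoc power_0_left)
  with h n G show "(\<Sum>w\<in>{1..D}. c w * of_nat w ^ n) = 0" by auto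
qed

lemma psi_zero: "psi k d t L y (0 :: (nat \<Rightarrow> nat \<Rightarrow> bool) \<Rightarrow> 'a::field) = 0"
  by (simp add: psi_def)

lemma REL:
  fixes a :: "nat \<Rightarrow> nat \<Rightarrow> nat \<Rightarrow> bool \<Rightarrow> 'a::real_normed_field"
  assumes a_nz: "\<forall>j<k. \<forall>r<k. r \<noteq> j \<longrightarrow> (\<forall>p<d r. a j r p \<noteq> 0)"
    and gt: "\<forall>j<k. \<forall>r<k. r \<noteq> j \<longrightarrow> (\<forall>p<d r. a j r p False + t * a j r p True \<noteq> 0)"
    and ij: "j0 < k" "r0 < k" "r0 \<noteq> j0"
    and pq: "p < d r0" "q < d r0" "p \<noteq> q"
    and ns: "\<not> same_line (a j0 r0 p) (a j0 r0 q)"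
    and I: "I = Sigma {..<k} (\<lambda>l. {1..d l}) \<union> {(r0,0),(j0,0)}"
    and rel: "(\<Sum>i\<in>I. tscale (c i) (Fe k d a t i)) = 0"
  shows "\<forall>i\<in>I. c i = 0"
proof -
  let ?F = "Fe k d a t"
  let ?G = "Gf k d a t"
  define \<kappa> where "\<kappa> L w = (1 + t * of_nat w) ^ d L" for L w
  have Gnz: "?G L \<noteq> 0" if "L < k" for L
    using gt that by (auto simp: Gf_def)
  have Rnz: "Rf k d a t j0 r0 \<noteq> 0"
    using gt ij by (auto simp: Rf_def)
  define Sg where "Sg = Sigma {..<k} (\<lambda>l. {1..d l})"
  have eq0: "(\<Sum>i\<in>I. c i * psi k d t L y (?F i)) = 0" for L y
    using arg_cong[OF rel, of "psi k d t L y"] by (simp add: psi_lin psi_zero)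
  have split: "(\<Sum>i\<in>I. c i * psi k d t L y (?F i)) =
      (\<Sum>w\<in>{1..d L}. c (L,w) * ((Pb (d L) (bet (of_nat w)) y - \<kappa> L w * Pb (d L) (bet 0) y) * ?G L))
      + c (r0,0) * psi k d t L y (?F (r0,0)) + c (j0,0) * psi k d t L y (?F (j0,0))"
    if L: "L < k" for L y
  proof -
    have disj: "Sg \<inter> {(r0,0),(j0,0)} = {}" by (auto simp: Sg_def)
    have "(\<Sum>i\<in>I. c i * psi k d t L y (?F i)) = (\<Sum>i\<in>Sg. c i * psi k d t L y (?F i))
        + (\<Sum>i\<in>{(r0,0),(j0,0)}. c i * psi k d t L y (?F i))"
      unfolding I Sg_def[symmetric] by (rule sum.union_disjoint) (auto simp: Sg_def disj)
    also have "(\<Sum>i\<in>{(r0,0),(j0,0)}. c i * psi k d t L y (?F i)) =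
        c (r0,0) * psi k d t L y (?F (r0,0)) + c (j0,0) * psi k d t L y (?F (j0,0))"
      using ij by simp
    also have "(\<Sum>i\<in>Sg. c i * psi k d t L y (?F i)) = (\<Sum>l<k. \<Sum>w\<in>{1..d l}. c (l,w) * psi k d t L y (?F (l,w)))"
      unfolding Sg_def by (subst sum.Sigma) auto
    also have "\<dots> = (\<Sum>w\<in>{1..d L}. c (L,w) * psi k d t L y (?F (L,w))) +
        (\<Sum>l\<in>{..<k}-{L}. \<Sum>w\<in>{1..d l}. c (l,w) * psi k d t L y (?F (l,w)))"
      using L by (subst sum.remove[of _ L]) auto
    also have "(\<Sum>l\<in>{..<k}-{L}. \<Sum>w\<in>{1..d l}. c (l,w) * psi k d t L y (?F (l,w))) = 0"
      using L by (intro sum.neutral ballI) (auto simp: psiFe_other)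
    also have "(\<Sum>w\<in>{1..d L}. c (L,w) * psi k d t L y (?F (L,w))) =
        (\<Sum>w\<in>{1..d L}. c (L,w) * ((Pb (d L) (bet (of_nat w)) y - \<kappa> L w * Pb (d L) (bet 0) y) * ?G L))"
      using L by (intro sum.cong refl) (auto simp: psiFe_same \<kappa>_def)
    finally show ?thesis by simp
  qed
  define SP where "SP y = (\<Sum>w\<in>{1..d r0}. c (r0,w) * ((Pb (d r0) (bet (of_nat w)) y - \<kappa> r0 w * Pb (d r0) (bet 0) y) * ?G r0))
      + c (r0,0) * (Pb (d r0) (bet 0) y * ?G r0)" for y
  let ?\<alpha> = "\<lambda>y. (\<Prod>s<d r0. a j0 r0 s (y s))"
  have Er0: "SP y + c (j0,0) * (?\<alpha> y * Rf k d a t j0 r0) = 0" for y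
    using eq0[of r0 y] split[of r0 y] ij by (simp add: SP_def psiFe0_same psiFe0_other)
  have perm: "Transposition.transpose p q permutes {..<d r0}"
    using pq by (intro permutes_swap_id) auto
  have SPsym: "SP (y \<circ> Transposition.transpose p q) = SP y" for y
    by (simp add: SP_def Pb_perm[OF perm])
  define y1 where "y1 = (\<lambda>s. if s = p then False else if s = q then True else a j0 r0 s False = 0)"
  have anz: "\<forall>s<d r0. a j0 r0 s \<noteq> 0" using a_nz ij by auto
  have neq: "?\<alpha> y1 \<noteq> ?\<alpha> (y1 \<circ> Transposition.transpose p q)"
    using alpha_swap[OF pq anz ns] unfolding y1_def by simp
  have cj0: "c (j0,0) = 0"
  proof -
    have "SP y1 + c (j0,0) * (?\<alpha> y1 * Rf k d a t j0 r0) = SP y1 + c (j0,0) * (?\<alpha> (y1 \<circ> Transposition.transpose p q) * Rf k d a t j0 r0)"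
      using Er0[of y1] Er0[of "y1 \<circ> Transposition.transpose p q"] SPsym[of y1] by simp
    hence "c (j0,0) * (?\<alpha> y1 - ?\<alpha> (y1 \<circ> Transposition.transpose p q)) * Rf k d a t j0 r0 = 0"
      by (simp add: algebra_simps)
    with neq Rnz show ?thesis by simp
  qed
  have cr0w: "\<forall>w\<in>{1..d r0}. c (r0,w) = 0"
  proof (rule vdm2[OF Gnz[OF ij(2)], where \<kappa>="\<kappa> r0"], rule ballI)
    fix n assume n: "n \<in> {1..d r0}"
    have P0: "Pb (d r0) (bet 0) (\<lambda>p. p < n) = 0" using n by (simp add: Pb_prefix power_0_left)
    show "(\<Sum>w\<in>{1..d r0}. c (r0,w) * ((Pb (d r0) (bet (of_nat w)) (\<lambda>p. p < n) - \<kappa> r0 w * Pb (d r0) (bet 0) (\<lambda>p. p < n)) * ?G r0)) = 0"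
      using Er0[of "\<lambda>p. p < n"] cj0 by (simp add: SP_def P0)
  qed
  have cr0: "c (r0,0) = 0"
  proof -
    have P1: "Pb (d r0) (bet 0) (\<lambda>p. False) = 1" by (simp add: Pb_def bet_def)
    have "c (r0,0) * ?G r0 = 0"
      using Er0[of "\<lambda>p. False"] cj0 cr0w by (simp add: SP_def P1)
    with Gnz[OF ij(2)] show ?thesis by simp
  qed
  have cL: "\<forall>w\<in>{1..d L}. c (L,w) = 0" if L: "L < k" for L
  proof (rule vdm2[OF Gnz[OF L], where \<kappa>="\<kappa> L"], rule ballI)
    fix n assume n: "n \<in> {1..d L}"
    show "(\<Sum>w\<in>{1..d L}. c (L,w) * ((Pb (d L) (bet (of_nat w)) (\<lambda>p. p < n) - \<kappa> L w * Pb (d L) (bet 0) (\<lambda>p. p < n)) * ?G L)) = 0"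
      using eq0[of L "\<lambda>p. p < n"] split[OF L, of "\<lambda>p. p < n"] cj0 cr0 by simp
  qed
  show ?thesis
  proof
    fix i assume "i \<in> I"
    then show "c i = 0" using cL cj0 cr0 unfolding I by (cases i) auto
  qed
qed



theorem corollary2p33:
  fixes k :: nat and d :: "nat \<Rightarrow> nat"
    and a :: "nat \<Rightarrow> nat \<Rightarrow> nat \<Rightarrow> bool \<Rightarrow> 'a::real_normed_field"
  assumes d_pos: "\<forall>j<k. d j \<ge> 1"
    and a_nz: "\<forall>j<k. \<forall>r<k. r \<noteq> j \<longrightarrow> (\<forall>p<d r. a j r p \<noteq> 0)"
    and dim: "tdim (\<Union>j<k. ins_space k d a j) = (\<Sum>j<k. d j) + 1"
  shows "\<forall>j<k. \<forall>r<k. r \<noteq> j \<longrightarrow> (\<forall>p<d r. \<forall>q<d r. same_line (a j r p) (a j r q))"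
proof (rule ccontr)
  assume "\<not> ?thesis"
  then obtain j0 r0 p q where ij: "j0 < k" "r0 < k" "r0 \<noteq> j0" and pq0: "p < d r0" "q < d r0"
    and ns: "\<not> same_line (a j0 r0 p) (a j0 r0 q)" by blast
  have "p \<noteq> q"
  proof
    assume "p = q"
    hence "same_line (a j0 r0 p) (a j0 r0 q)" unfolding same_line_def by (intro exI[of _ 1]) auto
    with ns show False by simp
  qed
  note pq = pq0 this
  obtain t where gt: "\<forall>j<k. \<forall>r<k. r \<noteq> j \<longrightarrow> (\<forall>p<d r. a j r p False + t * a j r p True \<noteq> 0)"
    using generic_t[OF a_nz] by blast
  define Sg where "Sg = Sigma {..<k} (\<lambda>l. {1..d l})"
  define I where "I = Sg \<union> {(r0,0),(j0,0)}"
  define F where "F = Fe k d a t"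
  interpret V: vector_space "tscale :: 'a \<Rightarrow> ((nat \<Rightarrow> nat \<Rightarrow> bool) \<Rightarrow> 'a) \<Rightarrow> _"
    by (rule vs_tscale)
  have rel: "\<forall>i\<in>I. c i = 0" if "(\<Sum>i\<in>I. tscale (c i) (F i)) = 0" for c
    using REL[OF a_nz gt ij pq ns _ that[unfolded F_def]] unfolding I_def Sg_def by blast
  have finI: "finite I" by (simp add: I_def Sg_def)
  have inj: "inj_on F I"
  proof (rule inj_onI, rule ccontr)
    fix x y assume xy: "x \<in> I" "y \<in> I" "F x = F y" "x \<noteq> y"
    define c :: "nat \<times> nat \<Rightarrow> 'a" where "c i = (if i = x then 1 else if i = y then -1 else 0)" for i
    have "(\<Sum>i\<in>I. tscale (c i) (F i)) = 0"
    proof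
      fix z
      have "(\<Sum>i\<in>I. tscale (c i) (F i)) z = (\<Sum>i\<in>I. (if i = x then F x z else 0) + (if i = y then - F y z else 0))"
        unfolding sum_fun_apply tscale_def c_def using xy by (intro sum.cong) auto
      also have "\<dots> = F x z - F y z"
        using xy finI by (simp add: sum.distrib sum.delta)
      finally show "(\<Sum>i\<in>I. tscale (c i) (F i)) z = (0 :: (nat \<Rightarrow> nat \<Rightarrow> bool) \<Rightarrow> 'a) z"
        using xy by simp
    qed
    from rel[OF this] xy show False by (auto simp: c_def)
  qed
  have indep: "V.independent (F ` I)"
  proof (rule V.independent_if_scalars_zero)
    show "finite (F ` I)" using finI by simp
  next
    fix f x assume h: "(\<Sum>x\<in>F ` I. tscale (f x) x) = 0" and x: "x \<in> F ` I"
    have "(\<Sum>i\<in>I. tscale ((f \<circ> F) i) (F i)) = 0"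
      using h by (simp add: sum.reindex[OF inj])
    from rel[OF this] x show "f x = 0" by auto
  qed
  let ?U = "\<Union>j<k. ins_space k d a j"
  have sub: "F ` I \<subseteq> V.span ?U"
  proof
    fix z assume "z \<in> F ` I"
    then obtain l w where lw: "(l,w) \<in> I" "z = F (l,w)" by auto
    have "l < k" using lw ij by (auto simp: I_def Sg_def)
    hence "z \<in> ?U" using Fe_ins[of l k d a t w] lw by (auto simp: F_def)
    thus "z \<in> V.span ?U" by (rule V.span_base)
  qed
  obtain B where B: "B \<subseteq> ?U" "V.independent B" "?U \<subseteq> V.span B" "card B = V.dim ?U"
    using V.basis_exists by blast
  have cardB: "card B = (\<Sum>j<k. d j) + 1" using B(4) dim by (simp add: tdim_def)
  hence finB: "finite B" by (metis card.infinite nat.simps(3) add.commute plus_1_eq_Suc)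
  have "V.span ?U \<subseteq> V.span B"
    using V.span_mono[OF B(3)] by (simp add: V.span_span)
  with sub have sub2: "F ` I \<subseteq> V.span B" by blast
  have "card (F ` I) \<le> card B"
    using V.independent_span_bound[OF finB indep sub2] by simp
  moreover have "card (F ` I) = card I" using card_image[OF inj] .
  moreover have "card I = (\<Sum>j<k. d j) + 2"
  proof -
    have disj: "Sg \<inter> {(r0,0),(j0,0)} = {}" by (auto simp: Sg_def)
    have "card Sg = (\<Sum>j<k. d j)" by (simp add: Sg_def card_SigmaI)
    moreover have "card {(r0,0),(j0,0)} = 2" using ij by simp
    ultimately show ?thesis unfolding I_def
      by (subst card_Un_disjoint) (auto simp: Sg_def disj)
  qed
  ultimately show False using cardB by simp
qed


end
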